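(* Let $L$ be a Latin array of order $n$ that has a diagonal of weight $n-2$ and has no diagonal of weight greater than $n-2$. If $L$ has a diagonal of type B, then there exists a diagonal of type A that can be reached from it by a sequence of $\#$-swaps.
   Context: A Latin array of order $n$ is an $n\times n$ matrix each of whose cells contains a symbol (from an arbitrary set of symbols), such that no symbol occurs more than once in any row or in any column. A diagonal of an $n\times n$ array is a selection of $n$ cells, one from each row and one from each column; its weight is the number of distinct symbols on it. A diagonal of weight $n-2$ is of type A if two symbols each occur exactly twice on it (all others once), and of type B if one symbol occurs exactly three times on it (all others once). A $\#$-swap is the following operation: given a diagonal $T$ of weight $w$ and two of its cells $(i_0,j_0)$ and $(i_1,j_1)$ such that the remaining $n-2$ cells of $T$ still carry $w$ distinct symbols, replace these two cells by $(i_0,j_1)$ and $(i_1,j_0)$, obtaining a new diagonal (of weight at least $w$). *)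

theory Defs
  imports "HOL-Combinatorics.Permutations"
begin

definition latin_array :: "nat \<Rightarrow> (nat \<Rightarrow> nat \<Rightarrow> 'a) \<Rightarrow> bool" where
  "latin_array n L \<longleftrightarrow>
     (\<forall>i<n. \<forall>j<n. \<forall>j'<n. j \<noteq> j' \<longrightarrow> L i j \<noteq> L i j') \<and>
     (\<forall>j<n. \<forall>i<n. \<forall>i'<n. i \<noteq> i' \<longrightarrow> L i j \<noteq> L i' j)"

definition is_diagonal :: "nat \<Rightarrow> (nat \<Rightarrow> nat) \<Rightarrow> bool" where
  "is_diagonal n s \<longleftrightarrow> s permutes {..<n}"

definition diag_symbols :: "nat \<Rightarrow> (nat \<Rightarrow> nat \<Rightarrow> 'a) \<Rightarrow> (nat \<Rightarrow> nat) \<Rightarrow> 'a set" where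
  "diag_symbols n L s = (\<lambda>i. L i (s i)) ` {..<n}"

definition weight :: "nat \<Rightarrow> (nat \<Rightarrow> nat \<Rightarrow> 'a) \<Rightarrow> (nat \<Rightarrow> nat) \<Rightarrow> nat" where
  "weight n L s = card (diag_symbols n L s)"

definition occ :: "nat \<Rightarrow> (nat \<Rightarrow> nat \<Rightarrow> 'a) \<Rightarrow> (nat \<Rightarrow> nat) \<Rightarrow> 'a \<Rightarrow> nat" where
  "occ n L s x = card {i. i < n \<and> L i (s i) = x}"

definition type_A :: "nat \<Rightarrow> (nat \<Rightarrow> nat \<Rightarrow> 'a) \<Rightarrow> (nat \<Rightarrow> nat) \<Rightarrow> bool" where
  "type_A n L s \<longleftrightarrow> is_diagonal n s \<and> weight n L s = n - 2 \<and>
     (\<exists>x y. x \<noteq> y \<and> occ n L s x = 2 \<and> occ n L s y = 2 \<and>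
        (\<forall>z \<in> diag_symbols n L s. z \<noteq> x \<and> z \<noteq> y \<longrightarrow> occ n L s z = 1))"

definition type_B :: "nat \<Rightarrow> (nat \<Rightarrow> nat \<Rightarrow> 'a) \<Rightarrow> (nat \<Rightarrow> nat) \<Rightarrow> bool" where
  "type_B n L s \<longleftrightarrow> is_diagonal n s \<and> weight n L s = n - 2 \<and>
     (\<exists>x. occ n L s x = 3 \<and>
        (\<forall>z \<in> diag_symbols n L s. z \<noteq> x \<longrightarrow> occ n L s z = 1))"

definition hash_swap :: "nat \<Rightarrow> (nat \<Rightarrow> nat \<Rightarrow> 'a) \<Rightarrow> (nat \<Rightarrow> nat) \<Rightarrow> (nat \<Rightarrow> nat) \<Rightarrow> bool" where
  "hash_swap n L s t \<longleftrightarrow> is_diagonal n s \<and>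
     (\<exists>i0 i1. i0 < n \<and> i1 < n \<and> i0 \<noteq> i1 \<and>
        card ((\<lambda>i. L i (s i)) ` ({..<n} - {i0, i1})) = weight n L s \<and>
        t = s \<circ> Transposition.transpose i0 i1)"

end

theory Submission
  imports Defs
begin

definition St :: "nat \<Rightarrow> (nat \<Rightarrow> nat \<Rightarrow> 'a) \<Rightarrow> (nat \<Rightarrow> nat) \<Rightarrow> nat \<Rightarrow> (nat \<Rightarrow> nat) \<Rightarrow> nat \<Rightarrow> bool" where
  "St n L s a e w \<longleftrightarrow> e permutes {..<n} \<and> (hash_swap n L)\<^sup>*\<^sup>* s e \<and> s permutes {..<n} \<and>
     a < n \<and> w < n \<and> w \<noteq> a \<and> e w = s w \<and>
     inj_on (\<lambda>i. L i (e i)) ({..<n} - {a,w}) \<and>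
     L a (e a) \<in> (\<lambda>i. L i (e i)) ` ({..<n} - {a,w}) \<and> L w (e w) = L a (e a) \<and>
     (\<forall>r<n. r \<noteq> a \<longrightarrow> e r \<noteq> s r \<longrightarrow> L r (e r) = L a (s r))"

lemma step:
  assumes lat: "latin_array n L"
    and mx: "\<forall>s. is_diagonal n s \<longrightarrow> weight n L s \<le> n - 2"
    and st: "St n L s a e w"
  shows "(\<exists>t. type_A n L t \<and> (hash_swap n L)\<^sup>*\<^sup>* s t) \<or>
         (\<exists>e' w'. St n L s a e' w' \<and> card {i. i < n \<and> e i \<noteq> s i} < card {i. i < n \<and> e' i \<noteq> s i})"
proof -
  define f where "f = (\<lambda>i. L i (e i))"
  define R0 where "R0 = {..<n} - {a,w}"
  define D0 where "D0 = f ` R0"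
  have ep: "e permutes {..<n}" and reach: "(hash_swap n L)\<^sup>*\<^sup>* s e" and sp: "s permutes {..<n}"
    and an: "a < n" and wn: "w < n" and wa: "w \<noteq> a" and ews: "e w = s w"
    and inj: "inj_on f R0" and aD: "f a \<in> D0" and wf: "f w = f a"
    and J: "\<forall>r<n. r \<noteq> a \<longrightarrow> e r \<noteq> s r \<longrightarrow> L r (e r) = L a (s r)"
    using st unfolding St_def f_def R0_def D0_def by auto
  have fin: "finite R0" unfolding R0_def by auto
  have cR0: "card R0 = n - 2" unfolding R0_def using an wn wa by (simp add: card_Diff_subset)
  have cD0: "card D0 = n - 2" unfolding D0_def using inj cR0 by (simp add: card_image)
  have finD: "finite D0" unfolding D0_def using fin by simp
  have allim: "f ` {..<n} = D0"
  proof -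
    have "{..<n} = insert a (insert w R0)" unfolding R0_def using an wn by auto
    then have "f ` {..<n} = insert (f a) (insert (f w) D0)" unfolding D0_def by auto
    then show ?thesis using aD wf by auto
  qed
  have we: "weight n L e = n - 2"
    unfolding weight_def diag_symbols_def using allim cD0 f_def by simp
  define e' where "e' = e \<circ> Transposition.transpose a w"
  have hs: "hash_swap n L e e'"
    unfolding hash_swap_def is_diagonal_def e'_def
    using ep an wn wa we cD0 unfolding D0_def R0_def f_def by (intro conjI exI[of _ a] exI[of _ w]) auto
  have reach': "(hash_swap n L)\<^sup>*\<^sup>* s e'" using reach hs by simp
  have e'p: "e' permutes {..<n}" unfolding e'_def
    using ep an wn by (simp add: permutes_compose permutes_swap_id)
  have e'a: "e' a = e w" and e'w: "e' w = e a" and e'o: "\<And>i. i \<noteq> a \<Longrightarrow> i \<noteq> w \<Longrightarrow> e' i = e i"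
    unfolding e'_def by auto
  define f' where "f' = (\<lambda>i. L i (e' i))"
  define p where "p = L a (e w)"
  define q where "q = L w (e a)"
  have f'a: "f' a = p" and f'w: "f' w = q" and f'o: "\<And>i. i \<in> R0 \<Longrightarrow> f' i = f i"
    unfolding f'_def p_def q_def f_def R0_def using e'a e'w e'o by auto
  have im': "f' ` {..<n} = insert p (insert q D0)"
  proof -
    have "{..<n} = insert a (insert w R0)" unfolding R0_def using an wn by auto
    then have "f' ` {..<n} = insert (f' a) (insert (f' w) (f' ` R0))" by auto
    also have "f' ` R0 = D0" unfolding D0_def using f'o by auto
    finally show ?thesis using f'a f'w by simp
  qed
  have "weight n L e' \<le> n - 2" using mx e'p unfolding is_diagonal_def by auto
  then have cle: "card (insert p (insert q D0)) \<le> n - 2"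
    unfolding weight_def diag_symbols_def using im' f'_def by simp
  have pD: "p \<in> D0"
  proof (rule ccontr)
    assume "p \<notin> D0"
    then have "card (insert p D0) = n - 1" using cD0 finD an wn wa by simp
    moreover have "card (insert p D0) \<le> card (insert p (insert q D0))"
      using finD by (intro card_mono) auto
    ultimately show False using cle an wn wa by linarith
  qed
  have qD: "q \<in> D0"
  proof (rule ccontr)
    assume "q \<notin> D0"
    then have "card (insert q D0) = n - 1" using cD0 finD an wn wa by simp
    moreover have "card (insert q D0) \<le> card (insert p (insert q D0))"
      using finD by (intro card_mono) auto
    ultimately show False using cle an wn wa by linarith
  qed
  obtain rp where rp: "rp \<in> R0" "f rp = p" using pD unfolding D0_def by auto
  obtain rq where rq: "rq \<in> R0" "f rq = q" using qD unfolding D0_def by auto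
  have imD: "f' ` {..<n} = D0" using im' pD qD by auto
  have we': "weight n L e' = n - 2"
    unfolding weight_def diag_symbols_def using imD cD0 f'_def by simp
  show ?thesis
  proof (cases "p = q")
    case False
    have occp: "{i. i < n \<and> f' i = p} = {a, rp}"
    proof -
      have uq: "i = rp" if "i \<in> R0" "f i = p" for i using inj rp that unfolding inj_on_def by metis
      show ?thesis
      proof (rule set_eqI, rule iffI)
        fix i assume "i \<in> {i. i < n \<and> f' i = p}"
        then have i: "i < n" "f' i = p" by simp_all
        show "i \<in> {a, rp}"
        proof (cases "i = a \<or> i = w")
          case True
          then show ?thesis using i f'a f'w False by auto
        next
          case F2: False
          then have "i \<in> R0" using i(1) unfolding R0_def by simp
          then have "i = rp" using uq i(2) f'o by simp
          then show ?thesis by simp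
        qed
      next
        fix i assume "i \<in> {a, rp}"
        moreover have "rp < n" using rp(1) unfolding R0_def by simp
        moreover have "f' rp = p" using rp f'o by simp
        ultimately show "i \<in> {i. i < n \<and> f' i = p}" using f'a an by auto
      qed
    qed
    have occq: "{i. i < n \<and> f' i = q} = {w, rq}"
    proof -
      have uq: "i = rq" if "i \<in> R0" "f i = q" for i using inj rq that unfolding inj_on_def by metis
      show ?thesis
      proof (rule set_eqI, rule iffI)
        fix i assume "i \<in> {i. i < n \<and> f' i = q}"
        then have i: "i < n" "f' i = q" by simp_all
        show "i \<in> {w, rq}"
        proof (cases "i = a \<or> i = w")
          case True
          then show ?thesis using i f'a f'w False by auto
        next
          case F2: False
          then have "i \<in> R0" using i(1) unfolding R0_def by simp
          then have "i = rq" using uq i(2) f'o by simp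
          then show ?thesis by simp
        qed
      next
        fix i assume "i \<in> {w, rq}"
        moreover have "rq < n" using rq(1) unfolding R0_def by simp
        moreover have "f' rq = q" using rq f'o by simp
        ultimately show "i \<in> {i. i < n \<and> f' i = q}" using f'w wn by auto
      qed
    qed
    have "type_A n L e'"
      unfolding type_A_def
    proof (intro conjI)
      show "is_diagonal n e'" using e'p unfolding is_diagonal_def by simp
      show "weight n L e' = n - 2" by (rule we')
      show "\<exists>x y. x \<noteq> y \<and> occ n L e' x = 2 \<and> occ n L e' y = 2 \<and>
        (\<forall>z \<in> diag_symbols n L e'. z \<noteq> x \<and> z \<noteq> y \<longrightarrow> occ n L e' z = 1)"
      proof (rule exI[of _ p], rule exI[of _ q], intro conjI)
      show "p \<noteq> q" by (rule False)
      show "occ n L e' p = 2" unfolding occ_def using occp rp(1) unfolding f'_def R0_def by auto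
      show "occ n L e' q = 2" unfolding occ_def using occq rq(1) unfolding f'_def R0_def by auto
      show "\<forall>z\<in>diag_symbols n L e'. z \<noteq> p \<and> z \<noteq> q \<longrightarrow> occ n L e' z = 1"
      proof (intro ballI impI)
        fix z assume zin: "z \<in> diag_symbols n L e'" and zpq: "z \<noteq> p \<and> z \<noteq> q"
        then have "z \<in> D0" using imD unfolding diag_symbols_def f'_def by auto
        then obtain rz where rz: "rz \<in> R0" "f rz = z" unfolding D0_def by auto
        have uq: "i = rz" if "i \<in> R0" "f i = z" for i using inj rz that unfolding inj_on_def by metis
        have "{i. i < n \<and> f' i = z} = {rz}"
        proof (rule set_eqI, rule iffI)
          fix i assume "i \<in> {i. i < n \<and> f' i = z}"
          then have i: "i < n" "f' i = z" by simp_all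
          show "i \<in> {rz}"
          proof (cases "i = a \<or> i = w")
            case True
            then show ?thesis using i f'a f'w zpq by auto
          next
            case F2: False
            then have "i \<in> R0" using i(1) unfolding R0_def by simp
            then have "i = rz" using uq i(2) f'o by simp
            then show ?thesis by simp
          qed
        next
          fix i assume "i \<in> {rz}"
          moreover have "rz < n" using rz(1) unfolding R0_def by simp
          moreover have "f' rz = z" using rz f'o by simp
          ultimately show "i \<in> {i. i < n \<and> f' i = z}" by auto
        qed
        then show "occ n L e' z = 1" unfolding occ_def f'_def by simp
      qed
    qed
    qed
    then show ?thesis using reach' by blast
  next
    case True
    have rpa: "rp \<noteq> a" and rpw: "rp \<noteq> w" and rpn: "rp < n" using rp(1) unfolding R0_def by auto
    have e'rp: "e' rp = e rp" using e'o rpa rpw by simp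
    have fix': "e' rp = s rp"
    proof (rule ccontr)
      assume "e' rp \<noteq> s rp"
      then have "L rp (e rp) = L a (s rp)" using J rpn rpa e'rp by auto
      then have "L a (s rp) = L a (s w)" using rp(2) ews unfolding f_def p_def by simp
      moreover have "s rp < n" using permutes_in_image[OF sp, of rp] rpn by simp
      moreover have "s w < n" using permutes_in_image[OF sp, of w] wn by simp
      ultimately have "s rp = s w" using lat an unfolding latin_array_def by blast
      then have "rp = w" using sp by (metis permutes_inj injD)
      then show False using rpw by simp
    qed
    have inj': "inj_on f' ({..<n} - {a, rp})"
    proof (rule inj_onI)
      fix i j assume i: "i \<in> {..<n} - {a, rp}" and j: "j \<in> {..<n} - {a, rp}" and eq: "f' i = f' j"
      have fr: "f' k \<noteq> p" if "k \<in> R0" "k \<noteq> rp" for k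
        using inj rp that f'o unfolding inj_on_def by metis
      show "i = j"
      proof (cases "i = w")
        case True
        then show ?thesis using j eq f'w fr[of j] \<open>p = q\<close> unfolding R0_def by (cases "j = w") auto
      next
        case False
        then have iR: "i \<in> R0" using i unfolding R0_def by auto
        show ?thesis
        proof (cases "j = w")
          case True
          then show ?thesis using iR i eq f'w fr[of i] \<open>p = q\<close> by auto
        next
          case False
          then have "j \<in> R0" using j unfolding R0_def by auto
          then show ?thesis using iR eq f'o inj unfolding inj_on_def by metis
        qed
      qed
    qed
    have St': "St n L s a e' rp"
      unfolding St_def
    proof (intro conjI)
      show "L a (e' a) \<in> (\<lambda>i. L i (e' i)) ` ({..<n} - {a, rp})"
        using f'a f'w \<open>p = q\<close> wn wa rpw unfolding f'_def
        by (intro image_eqI[of _ _ w]) auto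
      show "L rp (e' rp) = L a (e' a)" using e'rp rp(2) f'a unfolding f_def f'_def by simp
      show "\<forall>r<n. r \<noteq> a \<longrightarrow> e' r \<noteq> s r \<longrightarrow> L r (e' r) = L a (s r)"
      proof (intro allI impI)
        fix r assume rn: "r < n" and ra: "r \<noteq> a" and rs: "e' r \<noteq> s r"
        show "L r (e' r) = L a (s r)"
        proof (cases "r = w")
          case True
          then show ?thesis using e'w \<open>p = q\<close> ews unfolding p_def q_def by simp
        next
          case False
          then show ?thesis using J rn ra rs e'o by auto
        qed
      qed
    qed (use e'p reach' sp an rpn rpa fix' inj' in \<open>auto simp: f'_def\<close>)
    have Msub: "{i. i < n \<and> e i \<noteq> s i} \<subseteq> {i. i < n \<and> e' i \<noteq> s i}"
    proof
      fix i assume "i \<in> {i. i < n \<and> e i \<noteq> s i}"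
      then have i: "i < n" "e i \<noteq> s i" by auto
      show "i \<in> {i. i < n \<and> e' i \<noteq> s i}"
      proof (cases "i = a")
        case True
        have "s w \<noteq> s a" using sp wa by (metis permutes_inj injD)
        then show ?thesis using True i e'a ews by simp
      next
        case False
        then have "i \<noteq> w" using i ews by auto
        then show ?thesis using False i e'o by simp
      qed
    qed
    have wnew: "w \<in> {i. i < n \<and> e' i \<noteq> s i} - {i. i < n \<and> e i \<noteq> s i}"
    proof -
      have "e a \<noteq> e w" using ep wa by (metis permutes_inj injD)
      then show ?thesis using wn e'w ews by simp
    qed
    have "card {i. i < n \<and> e i \<noteq> s i} < card {i. i < n \<and> e' i \<noteq> s i}"
      using Msub wnew by (intro psubset_card_mono) auto
    then show ?thesis using St' by blast
  qed
qed

theorem lemma2p2: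
  fixes n :: nat and L :: "nat \<Rightarrow> nat \<Rightarrow> 'a"
  assumes "latin_array n L"
    and "\<exists>s. is_diagonal n s \<and> weight n L s = n - 2"
    and "\<forall>s. is_diagonal n s \<longrightarrow> weight n L s \<le> n - 2"
    and "type_B n L s"
  shows "\<exists>t. type_A n L t \<and> (hash_swap n L)\<^sup>*\<^sup>* s t"
proof -
  let ?A = "\<exists>t. type_A n L t \<and> (hash_swap n L)\<^sup>*\<^sup>* s t"
  from assms(4) obtain x where sp0: "is_diagonal n s" and occx: "occ n L s x = 3"
    and oth: "\<forall>z \<in> diag_symbols n L s. z \<noteq> x \<longrightarrow> occ n L s z = 1"
    unfolding type_B_def by blast
  have sp: "s permutes {..<n}" using sp0 unfolding is_diagonal_def .
  from occx obtain a b c where abc: "{i. i < n \<and> L i (s i) = x} = {a,b,c}"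
    and ab: "a \<noteq> b" and bc: "b \<noteq> c" and ac: "a \<noteq> c"
    unfolding occ_def card_3_iff by blast
  have "a \<in> {i. i < n \<and> L i (s i) = x}" "b \<in> {i. i < n \<and> L i (s i) = x}"
    "c \<in> {i. i < n \<and> L i (s i) = x}" by (simp_all only: abc) simp_all
  then have an: "a < n" "L a (s a) = x" and bn: "b < n" "L b (s b) = x"
    and cn: "c < n" "L c (s c) = x" by simp_all
  have inj: "inj_on (\<lambda>i. L i (s i)) ({..<n} - {a,b})"
  proof (rule inj_onI)
    fix i j assume i: "i \<in> {..<n} - {a,b}" and j: "j \<in> {..<n} - {a,b}" and eq: "L i (s i) = L j (s j)"
    show "i = j"
    proof (cases "L i (s i) = x")
      case True
      have "i \<in> {i. i < n \<and> L i (s i) = x}" using i True by simp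
      then have "i \<in> {a,b,c}" by (simp only: abc)
      then have ic: "i = c" using i by simp
      have "j \<in> {i. i < n \<and> L i (s i) = x}" using j True eq by simp
      then have "j \<in> {a,b,c}" by (simp only: abc)
      then have "j = c" using j by simp
      then show ?thesis using ic by simp
    next
      case False
      have "L i (s i) \<in> diag_symbols n L s" using i unfolding diag_symbols_def by auto
      then have "card {k. k < n \<and> L k (s k) = L i (s i)} = 1" using oth False unfolding occ_def by auto
      then obtain u where U: "{k. k < n \<and> L k (s k) = L i (s i)} = {u}" by (rule card_1_singletonE)
      have hi: "i \<in> {k. k < n \<and> L k (s k) = L i (s i)}" using i by simp
      have hj: "j \<in> {k. k < n \<and> L k (s k) = L i (s i)}" using j eq by simp
      have "i \<in> {u}" using hi unfolding U .
      moreover have "j \<in> {u}" using hj unfolding U .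
      ultimately have "i = u" "j = u" by simp_all
      then show ?thesis by simp
    qed
  qed
  have St0: "St n L s a s b"
    unfolding St_def using sp an bn cn ab ac bc inj
    by (intro conjI) (auto intro!: image_eqI[of _ _ c])
  have iter: "?A \<or> (\<exists>e w. St n L s a e w \<and> k \<le> card {i. i < n \<and> e i \<noteq> s i})" for k
  proof (induction k)
    case 0
    then show ?case using St0 by blast
  next
    case (Suc k)
    then show ?case
    proof
      assume "\<exists>e w. St n L s a e w \<and> k \<le> card {i. i < n \<and> e i \<noteq> s i}"
      then obtain e w where "St n L s a e w" and kle: "k \<le> card {i. i < n \<and> e i \<noteq> s i}" by blast
      from step[OF assms(1) assms(3) this(1)] show ?case using kle by (meson Suc_leI le_trans less_imp_le_nat order.strict_trans1)
    qed simp
  qed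
  show ?thesis
  proof (rule ccontr)
    assume nA: "\<not> ?A"
    from iter[of "Suc n"] nA obtain e w where "Suc n \<le> card {i. i < n \<and> e i \<noteq> s i}" by blast
    moreover have "card {i. i < n \<and> e i \<noteq> s i} \<le> card {..<n}" by (intro card_mono) auto
    ultimately show False by simp
  qed
qed

end
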